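(* Let $G$ be a finite simple graph, $k\ge 2$, and let $e=\{a,b\}$ be an edge of $G$. Suppose that for every $k$-matching $\{e_1,\ldots,e_k\}$ of $G-e$ there exist a vertex $c\notin\{a,b\}$ with $\{c,a\}\in E(G)$ or $\{c,b\}\in E(G)$, and an index $j$ with $c\in e_j$ and $e_1\cdots \widehat{e_j}\cdots e_k\in I(G-\{a,b\})^{[k-1]}$. Then the ideal $L(G,e,k):=I(G-e)^{[k]}\cap (ab)\,I(G-\{a,b\})^{[k-1]}$ is generated in degree $2k+1$, i.e. all its minimal monomial generators have degree $2k+1$.
   Context: $G$ is a finite simple graph on vertex set $\{x_1,\ldots,x_n\}$ identified with the variables of $S=K[x_1,\ldots,x_n]$ ($K$ a field); edges are identified with degree-2 monomials. For a graph $H$, $I(H)^{[k]}$ is the ideal generated by all products $e_1\cdots e_k$ over $k$-matchings of $H$. $G-e$ is the graph on the same vertex set as $G$ with the edge $e$ removed; $G-\{a,b\}$ is the induced subgraph on $V(G)\setminus\{a,b\}$. The hat denotes omission of a factor. *)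

theory Defs
  imports Main "HOL-Library.Multiset"
begin

definition simple_graph :: "'a set \<Rightarrow> 'a set set \<Rightarrow> bool" where
  "simple_graph V E \<longleftrightarrow> finite V \<and> (\<forall>f\<in>E. f \<subseteq> V \<and> card f = 2)"

text \<open>Monomials in the variables V are multisets over V (exponent vectors);
  the product of monomials is multiset sum, divisibility is sub-multiset,
  the degree is the size.\<close>
definition monomials :: "'a set \<Rightarrow> 'a multiset set" where
  "monomials V = {m. set_mset m \<subseteq> V}"

definition edge_mon :: "'a set \<Rightarrow> 'a multiset" where
  "edge_mon f = mset_set f"

definition is_matching :: "'a set set \<Rightarrow> 'a set set \<Rightarrow> nat \<Rightarrow> bool" where
  "is_matching E M k \<longleftrightarrow> M \<subseteq> E \<and> finite M \<and> card M = k \<and>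
     (\<forall>f\<in>M. \<forall>g\<in>M. f \<noteq> g \<longrightarrow> f \<inter> g = {})"

definition matching_prod :: "'a set set \<Rightarrow> 'a multiset" where
  "matching_prod M = (\<Sum>f\<in>M. edge_mon f)"

text \<open>The monomial ideal I(H)^[k] of S = K[V], represented by the set of
  monomials it contains (a monomial ideal is determined by its monomials).\<close>
definition sq_power_mons :: "'a set \<Rightarrow> 'a set set \<Rightarrow> nat \<Rightarrow> 'a multiset set" where
  "sq_power_mons V E k =
     {m \<in> monomials V. \<exists>M. is_matching E M k \<and> matching_prod M \<subseteq># m}"

definition del_edge :: "'a set set \<Rightarrow> 'a set \<Rightarrow> 'a set set" where
  "del_edge E e = E - {e}"

definition del_verts_edges :: "'a set set \<Rightarrow> 'a set \<Rightarrow> 'a set set" where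
  "del_verts_edges E W = {f \<in> E. f \<inter> W = {}}"

definition L_mons :: "'a set \<Rightarrow> 'a set set \<Rightarrow> 'a \<Rightarrow> 'a \<Rightarrow> nat \<Rightarrow> 'a multiset set" where
  "L_mons V E a b k =
     sq_power_mons V (del_edge E {a,b}) k \<inter>
     {m \<in> monomials V. \<exists>n \<in> sq_power_mons V (del_verts_edges E {a,b}) (k - 1).
                          {#a, b#} + n \<subseteq># m}"

definition min_gens :: "'a multiset set \<Rightarrow> 'a multiset set" where
  "min_gens I = {m \<in> I. \<forall>m'\<in>I. m' \<subseteq># m \<longrightarrow> m' = m}"

end

theory Submission
  imports Defs
begin

lemma mp_size:
  assumes "finite N" "\<forall>g\<in>N. card g = 2"
  shows "size (matching_prod N) = 2 * card N"
  using assms unfolding matching_prod_def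
proof (induction N rule: finite_induct)
  case empty then show ?case by simp
next
  case (insert x F)
  have "card x = 2" using insert by simp
  then have "finite x" by (metis card.infinite zero_neq_numeral)
  then show ?case using insert \<open>card x = 2\<close> by (simp add: edge_mon_def)
qed

lemma mp_set:
  assumes "finite N" "\<forall>g\<in>N. finite g"
  shows "set_mset (matching_prod N) = \<Union>N"
  using assms unfolding matching_prod_def
  by (induction N rule: finite_induct) (auto simp: edge_mon_def)

lemma mp_insert:
  assumes "finite N" "g \<notin> N"
  shows "matching_prod (insert g N) = edge_mon g + matching_prod N"
  using assms unfolding matching_prod_def by simp

lemma mp_remove:
  assumes "finite M" "f \<in> M"
  shows "matching_prod M = edge_mon f + matching_prod (M - {f})"
  using assms unfolding matching_prod_def by (simp add: sum.remove)

lemma key: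
  fixes V :: "'a set" and E :: "'a set set" and a b c :: 'a and k :: nat
  assumes sg: "simple_graph V E"
    and ab: "{a, b} \<in> E"
    and cE: "{c, a} \<in> E" and cab: "c \<notin> {a,b}"
    and m: "m \<in> min_gens (L_mons V E a b k)"
    and M: "is_matching (del_edge E {a,b}) M k" and uM: "matching_prod M \<subseteq># m"
    and f: "f \<in> M" "c \<in> f"
    and rest: "matching_prod (M - {f}) \<in> sq_power_mons V (del_verts_edges E {a,b}) (k - 1)"
    and k: "k \<ge> 1"
  shows "size m = 2 * k + 1"
proof -
  have mL: "m \<in> L_mons V E a b k" and mmin: "\<And>m'. m' \<in> L_mons V E a b k \<Longrightarrow> m' \<subseteq># m \<Longrightarrow> m' = m"
    using m unfolding min_gens_def by auto
  from mL obtain n where "{#a, b#} + n \<subseteq># m" unfolding L_mons_def by auto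
  then have am: "a \<in># m" and bm: "b \<in># m"
    by (metis add_mset_add_single mset_subset_eqD multi_member_this union_iff union_commute)+
  from rest obtain N where N: "is_matching (del_verts_edges E {a,b}) N (k-1)"
    and wN: "matching_prod N \<subseteq># matching_prod (M - {f})"
    unfolding sq_power_mons_def by auto
  define w where "w = matching_prod N"
  have fE: "\<forall>g\<in>E. g \<subseteq> V \<and> card g = 2" using sg unfolding simple_graph_def by auto
  have finE: "\<forall>g\<in>E. finite g" using fE by (metis card.infinite zero_neq_numeral)
  have NE: "N \<subseteq> E" and finN: "finite N" and cardN: "card N = k - 1"
    and Nab: "\<forall>g\<in>N. g \<inter> {a,b} = {}"
    and Ndisj: "\<forall>g\<in>N. \<forall>h\<in>N. g \<noteq> h \<longrightarrow> g \<inter> h = {}"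
    using N unfolding is_matching_def del_verts_edges_def by auto
  have ME: "M \<subseteq> E" and finM: "finite M" and Mdisj: "\<forall>g\<in>M. \<forall>h\<in>M. g \<noteq> h \<longrightarrow> g \<inter> h = {}"
    using M unfolding is_matching_def del_edge_def by auto
  have setw: "set_mset w = \<Union>N" unfolding w_def using mp_set finN finE NE by blast
  have setMf: "set_mset (matching_prod (M - {f})) = \<Union>(M - {f})"
    using mp_set[of "M - {f}"] finM finE ME by blast
  have "c \<notin> \<Union>(M - {f})" using Mdisj f by blast
  then have cw: "c \<notin># w" using wN setMf unfolding w_def by (metis mset_subset_eqD)
  have aw: "a \<notin># w" and bw: "b \<notin># w" using setw Nab by auto
  have ca: "c \<noteq> a" "c \<noteq> b" "a \<noteq> b" using cab ab fE by (auto simp: card_insert_if)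
  have wm: "w \<subseteq># m"
    using wN uM mp_remove[OF finM f(1)] unfolding w_def
    by (metis mset_subset_eq_add_right subset_mset.order_trans)
  have cm: "c \<in># m"
  proof -
    have "edge_mon f \<subseteq># m" using uM mp_remove[OF finM f(1)]
      by (metis mset_subset_eq_add_left subset_mset.order_trans)
    moreover have "c \<in># edge_mon f" using f finE ME by (auto simp: edge_mon_def)
    ultimately show ?thesis by (meson mset_subset_eqD)
  qed
  define m2 where "m2 = w + {#c, a, b#}"
  have sub: "m2 \<subseteq># m"
    unfolding m2_def subseteq_mset_def
  proof
    fix x
    show "count (w + {#c, a, b#}) x \<le> count m x"
    proof (cases "x \<in> {a,b,c}")
      case True
      then have "count w x = 0" using aw bw cw by (auto simp: not_in_iff)
      moreover have "count m x \<ge> 1" using True am bm cm by auto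
      ultimately show ?thesis using True ca by auto
    next
      case False
      then have "count (w + {#c, a, b#}) x = count w x" by auto
      then show ?thesis using wm by (simp add: subseteq_mset_def)
    qed
  qed
  define N' where "N' = insert {c,a} N"
  have caN: "{c,a} \<notin> N" using Nab by auto
  have mpN': "matching_prod N' = {#c, a#} + w"
    unfolding N'_def w_def using mp_insert[OF finN caN] ca
    by (simp add: edge_mon_def)
  have N'm: "is_matching (del_edge E {a,b}) N' k"
    unfolding is_matching_def del_edge_def
  proof (intro conjI)
    show "N' \<subseteq> E - {{a,b}}" using NE Nab cE ca unfolding N'_def by (auto simp: doubleton_eq_iff)
    show "finite N'" using finN N'_def by simp
    show "card N' = k" using finN caN cardN k N'_def by simp
    show "\<forall>f\<in>N'. \<forall>g\<in>N'. f \<noteq> g \<longrightarrow> f \<inter> g = {}"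
    proof -
      have "\<forall>g\<in>N. {c,a} \<inter> g = {}" using Nab cw setw by auto
      then show ?thesis using Ndisj unfolding N'_def by blast
    qed
  qed
  have m2mon: "m2 \<in> monomials V"
  proof -
    have "set_mset w \<subseteq> V" using setw NE fE by auto
    moreover have "a \<in> V" "b \<in> V" using ab fE by auto
    moreover have "c \<in> V" using f ME fE by auto
    ultimately show ?thesis unfolding monomials_def m2_def by auto
  qed
  have wsq: "w \<in> sq_power_mons V (del_verts_edges E {a,b}) (k - 1)"
  proof -
    have "set_mset w \<subseteq> V" using setw NE fE by auto
    then show ?thesis unfolding sq_power_mons_def monomials_def using N w_def by auto
  qed
  have m2L: "m2 \<in> L_mons V E a b k"
    unfolding L_mons_def
  proof (intro IntI)
    show "m2 \<in> sq_power_mons V (del_edge E {a,b}) k"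
      unfolding sq_power_mons_def using m2mon N'm mpN' unfolding m2_def by force
    show "m2 \<in> {m \<in> monomials V. \<exists>n \<in> sq_power_mons V (del_verts_edges E {a,b}) (k - 1).
                          {#a, b#} + n \<subseteq># m}"
    proof -
      have "{#a, b#} + w \<subseteq># w + {#c, a, b#}" by (simp add: add_mset_commute)
      then show ?thesis using m2mon wsq unfolding m2_def by blast
    qed
  qed
  have "m2 = m" using mmin[OF m2L sub] .
  moreover have "size w = 2 * (k - 1)"
    unfolding w_def using mp_size[OF finN] NE fE cardN by auto
  moreover have "size m2 = size w + 3" unfolding m2_def by simp
  ultimately have "size m = 2 * (k - 1) + 3" by simp
  then show ?thesis using k by simp
qed

theorem lemma4p2:
  fixes V :: "'a set" and E :: "'a set set" and a b :: 'a and k :: nat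
  assumes "simple_graph V E"
    and "k \<ge> 2"
    and "{a, b} \<in> E"
    and "\<forall>M. is_matching (del_edge E {a,b}) M k \<longrightarrow>
           (\<exists>c. c \<notin> {a, b} \<and> ({c, a} \<in> E \<or> {c, b} \<in> E) \<and>
               (\<exists>f\<in>M. c \<in> f \<and>
                  matching_prod (M - {f}) \<in>
                    sq_power_mons V (del_verts_edges E {a,b}) (k - 1)))"
  shows "\<forall>m \<in> min_gens (L_mons V E a b k). size m = 2 * k + 1"
proof
  fix m assume m: "m \<in> min_gens (L_mons V E a b k)"
  then have "m \<in> sq_power_mons V (del_edge E {a,b}) k"
    unfolding min_gens_def L_mons_def by auto
  then obtain M where M: "is_matching (del_edge E {a,b}) M k" and uM: "matching_prod M \<subseteq># m"
    unfolding sq_power_mons_def by auto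
  from assms(4) M obtain c f where c: "c \<notin> {a,b}" "{c, a} \<in> E \<or> {c, b} \<in> E"
    and f: "f \<in> M" "c \<in> f"
    and rest: "matching_prod (M - {f}) \<in> sq_power_mons V (del_verts_edges E {a,b}) (k - 1)"
    by blast
  have k: "k \<ge> 1" using assms(2) by simp
  show "size m = 2 * k + 1"
  proof (cases "{c, a} \<in> E")
    case True
    show ?thesis using key[OF assms(1) assms(3) True c(1) m M uM f rest k] .
  next
    case False
    then have cb: "{c, b} \<in> E" using c by blast
    have ba: "{b, a} = {a, b}" by auto
    have c': "c \<notin> {b, a}" using c by auto
    have L: "L_mons V E b a k = L_mons V E a b k"
      unfolding L_mons_def ba
      by (simp add: add_mset_commute)
    have m': "m \<in> min_gens (L_mons V E b a k)" using m L by simp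
    show ?thesis
      using key[of V E b a c m k M f, unfolded ba, OF assms(1) assms(3) cb c(1) m' M uM f rest k] .
  qed
qed

end
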